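(* Let $K$ be a flag simplicial complex with a hereditary ordering $\succ$, and let $r$ be a positive integer. Suppose that for any two simplices $\sigma,\tau\in K$ with $\dim\sigma=\dim\tau=r$ and $\mu(\sigma)=\mu(\tau)$ we have $\sigma\cup\tau\in K$. Then for any two simplices $\sigma,\tau\in K$ with $\dim\sigma=\dim\tau>r$ and $\mu(\sigma)=\mu(\tau)$ we also have $\sigma\cup\tau\in K$.
   Context: $K$ is a finite simplicial complex (family of subsets of a finite vertex set containing $\emptyset$, closed under subsets); $\dim\sigma=|\sigma|-1$. $K$ is flag if whenever vertices $v_0,\dots,v_q$ are pairwise joined by edges of $K$, $\{v_0,\dots,v_q\}\in K$. For a strict total ordering $\succ$ of $K$ and non-empty $\sigma$, $\mu(\sigma)$ is the $\succ$-largest facet (codimension-one face) of $\sigma$; $\succ$ is hereditary if $\sigma\succ\tau$ whenever $\dim\sigma>\dim\tau$, and $\sigma\succ\tau$ whenever $\mu(\sigma)\succ\mu(\tau)$. *)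

theory Defs
  imports Main
begin

definition simplicial_complex :: "'a set set \<Rightarrow> bool" where
  "simplicial_complex K \<longleftrightarrow> finite K \<and> {} \<in> K \<and> (\<forall>\<sigma>\<in>K. finite \<sigma>) \<and>
     (\<forall>\<sigma>\<in>K. \<forall>\<tau>. \<tau> \<subseteq> \<sigma> \<longrightarrow> \<tau> \<in> K)"

definition sdim :: "'a set \<Rightarrow> int" where
  "sdim \<sigma> = int (card \<sigma>) - 1"

definition vertices :: "'a set set \<Rightarrow> 'a set" where
  "vertices K = \<Union>K"

definition flag :: "'a set set \<Rightarrow> bool" where
  "flag K \<longleftrightarrow> (\<forall>S. finite S \<and> S \<noteq> {} \<and> S \<subseteq> vertices K \<and>
      (\<forall>v\<in>S. \<forall>w\<in>S. v \<noteq> w \<longrightarrow> {v, w} \<in> K) \<longrightarrow> S \<in> K)"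

definition strict_total_order_on :: "'a set set \<Rightarrow> ('a set \<Rightarrow> 'a set \<Rightarrow> bool) \<Rightarrow> bool" where
  "strict_total_order_on K gt \<longleftrightarrow>
     (\<forall>\<sigma>\<in>K. \<not> gt \<sigma> \<sigma>) \<and>
     (\<forall>\<sigma>\<in>K. \<forall>\<tau>\<in>K. \<forall>\<rho>\<in>K. gt \<sigma> \<tau> \<longrightarrow> gt \<tau> \<rho> \<longrightarrow> gt \<sigma> \<rho>) \<and>
     (\<forall>\<sigma>\<in>K. \<forall>\<tau>\<in>K. \<sigma> \<noteq> \<tau> \<longrightarrow> gt \<sigma> \<tau> \<or> gt \<tau> \<sigma>)"

definition facets :: "'a set \<Rightarrow> 'a set set" where
  "facets \<sigma> = {\<sigma> - {v} | v. v \<in> \<sigma>}"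

definition mu :: "('a set \<Rightarrow> 'a set \<Rightarrow> bool) \<Rightarrow> 'a set \<Rightarrow> 'a set" where
  "mu gt \<sigma> = (THE \<tau>. \<tau> \<in> facets \<sigma> \<and> (\<forall>\<tau>'\<in>facets \<sigma>. \<tau>' \<noteq> \<tau> \<longrightarrow> gt \<tau> \<tau>'))"

definition hereditary :: "'a set set \<Rightarrow> ('a set \<Rightarrow> 'a set \<Rightarrow> bool) \<Rightarrow> bool" where
  "hereditary K gt \<longleftrightarrow> strict_total_order_on K gt \<and>
     (\<forall>\<sigma>\<in>K. \<forall>\<tau>\<in>K. sdim \<sigma> > sdim \<tau> \<longrightarrow> gt \<sigma> \<tau>) \<and>
     (\<forall>\<sigma>\<in>K. \<forall>\<tau>\<in>K. \<sigma> \<noteq> {} \<longrightarrow> \<tau> \<noteq> {} \<longrightarrow> gt (mu gt \<sigma>) (mu gt \<tau>) \<longrightarrow> gt \<sigma> \<tau>)"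

end

theory Submission
  imports Defs
begin

lemma max_exists:
  assumes "finite F" "F \<noteq> {}" "F \<subseteq> K" "strict_total_order_on K gt"
  shows "\<exists>m\<in>F. \<forall>y\<in>F. y \<noteq> m \<longrightarrow> gt m y"
  using assms
proof (induction F rule: finite_ne_induct)
  case (singleton x) then show ?case by simp
next
  case (insert x F)
  have FK: "F \<subseteq> K" and xK: "x \<in> K" using insert.prems by auto
  obtain m where m: "m \<in> F" "\<forall>y\<in>F. y \<noteq> m \<longrightarrow> gt m y" using insert.IH[OF FK insert.prems(2)] by blast
  have mK: "m \<in> K" using m FK by auto
  note to = insert.prems(2)[unfolded strict_total_order_on_def]
  have tr: "gt x m \<Longrightarrow> gt m y \<Longrightarrow> y \<in> K \<Longrightarrow> gt x y" for y
    using to xK mK by blast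
  have tot: "x \<noteq> m \<Longrightarrow> gt x m \<or> gt m x" using to xK mK by blast
  show ?case
  proof (cases "gt x m")
    case True
    have "\<forall>y\<in>insert x F. y \<noteq> x \<longrightarrow> gt x y"
    proof (intro ballI impI)
      fix y assume y: "y \<in> insert x F" "y \<noteq> x"
      then have yF: "y \<in> F" by simp
      show "gt x y"
      proof (cases "y = m")
        case True2: True
        then show ?thesis using True by simp
      next
        case False
        then have g: "gt m y" using m yF by simp
        show ?thesis using tr[OF True g] yF FK by auto
      qed
    qed
    then show ?thesis by blast
  next
    case False
    then have "x \<noteq> m \<longrightarrow> gt m x" using tot by blast
    then have "\<forall>y\<in>insert x F. y \<noteq> m \<longrightarrow> gt m y" using m by simp
    then show ?thesis using m by blast
  qed
qed

lemma facets_image: "facets \<sigma> = (\<lambda>v. \<sigma> - {v}) ` \<sigma>"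
  unfolding facets_def by blast

lemma facets_sub: "\<tau> \<in> facets \<sigma> \<Longrightarrow> \<tau> \<subseteq> \<sigma>"
  unfolding facets_image by blast

lemma mu_props:
  assumes sc: "simplicial_complex K" and so: "strict_total_order_on K gt"
    and s: "\<sigma> \<in> K" "\<sigma> \<noteq> {}"
  shows "mu gt \<sigma> \<in> facets \<sigma> \<and> (\<forall>\<tau>'\<in>facets \<sigma>. \<tau>' \<noteq> mu gt \<sigma> \<longrightarrow> gt (mu gt \<sigma>) \<tau>')"
proof -
  have fin: "finite \<sigma>" using sc s unfolding simplicial_complex_def by simp
  have ff: "finite (facets \<sigma>)" unfolding facets_image using fin by simp
  have fne: "facets \<sigma> \<noteq> {}" unfolding facets_image using s by simp
  have down: "\<And>x y. x \<in> K \<Longrightarrow> y \<subseteq> x \<Longrightarrow> y \<in> K" using sc unfolding simplicial_complex_def by blast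
  have fK: "facets \<sigma> \<subseteq> K" using down[OF s(1)] facets_sub by blast
  obtain m where m: "m \<in> facets \<sigma>" "\<forall>y\<in>facets \<sigma>. y \<noteq> m \<longrightarrow> gt m y"
    using max_exists[OF ff fne fK so] by blast
  have irr: "\<And>x. x \<in> K \<Longrightarrow> \<not> gt x x" using so unfolding strict_total_order_on_def by blast
  have tr: "\<And>x y z. x \<in> K \<Longrightarrow> y \<in> K \<Longrightarrow> z \<in> K \<Longrightarrow> gt x y \<Longrightarrow> gt y z \<Longrightarrow> gt x z"
    using so unfolding strict_total_order_on_def by blast
  have uniq: "m' = m" if a: "m' \<in> facets \<sigma> \<and> (\<forall>\<tau>'\<in>facets \<sigma>. \<tau>' \<noteq> m' \<longrightarrow> gt m' \<tau>')" for m'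
  proof (rule ccontr)
    assume ne: "m' \<noteq> m"
    then have g1: "gt m' m" using a m by simp
    have g2: "gt m m'" using a m ne by simp
    have "m \<in> K" "m' \<in> K" using fK a m by auto
    then show False using tr[OF \<open>m' \<in> K\<close> \<open>m \<in> K\<close> \<open>m' \<in> K\<close> g1 g2] irr by simp
  qed
  have "mu gt \<sigma> = m" unfolding mu_def
  proof (rule the_equality)
    show "m \<in> facets \<sigma> \<and> (\<forall>\<tau>'\<in>facets \<sigma>. \<tau>' \<noteq> m \<longrightarrow> gt m \<tau>')" using m by simp
  next
    fix m' assume "m' \<in> facets \<sigma> \<and> (\<forall>\<tau>'\<in>facets \<sigma>. \<tau>' \<noteq> m' \<longrightarrow> gt m' \<tau>')"
    then show "m' = m" by (rule uniq)
  qed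
  then show ?thesis using m by simp
qed

lemma mu_shift:
  assumes sc: "simplicial_complex K" and h: "hereditary K gt"
    and s: "\<sigma> \<in> K" "a \<in> \<sigma>" "mu gt \<sigma> = \<sigma> - {a}" "\<sigma> - {a} \<noteq> {}"
  shows "mu gt (insert a (mu gt (\<sigma> - {a}))) = mu gt (\<sigma> - {a})"
proof -
  note so = h[unfolded hereditary_def, THEN conjunct1]
  note her = h[unfolded hereditary_def, THEN conjunct2, THEN conjunct2]
  note irr = so[unfolded strict_total_order_on_def, THEN conjunct1]
  note tr = so[unfolded strict_total_order_on_def, THEN conjunct2, THEN conjunct1]
  have trR: "\<And>x y z. x \<in> K \<Longrightarrow> y \<in> K \<Longrightarrow> z \<in> K \<Longrightarrow> gt x y \<Longrightarrow> gt y z \<Longrightarrow> gt x z"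
    using tr by blast
  have irrR: "\<And>x. x \<in> K \<Longrightarrow> \<not> gt x x" using irr by blast
  have herR: "\<And>x y. x \<in> K \<Longrightarrow> y \<in> K \<Longrightarrow> x \<noteq> {} \<Longrightarrow> y \<noteq> {} \<Longrightarrow> gt (mu gt x) (mu gt y) \<Longrightarrow> gt x y"
    using her by blast
  have down: "\<And>x y. x \<in> K \<Longrightarrow> y \<subseteq> x \<Longrightarrow> y \<in> K" using sc unfolding simplicial_complex_def by blast
  define \<rho> where "\<rho> = \<sigma> - {a}"
  have \<rho>K: "\<rho> \<in> K" using down s unfolding \<rho>_def by blast
  have \<rho>ne: "\<rho> \<noteq> {}" using s \<rho>_def by auto
  have m\<rho>: "mu gt \<rho> \<in> facets \<rho>" using mu_props[OF sc so \<rho>K \<rho>ne] by auto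
  then obtain c where c: "c \<in> \<rho>" "mu gt \<rho> = \<rho> - {c}" unfolding facets_image by auto
  define \<rho>' where "\<rho>' = \<rho> - {c}"
  define \<sigma>' where "\<sigma>' = insert a \<rho>'"
  have "\<sigma>' \<subseteq> \<sigma>" using s(2) unfolding \<sigma>'_def \<rho>'_def \<rho>_def by auto
  then have \<sigma>'K: "\<sigma>' \<in> K" using down[OF s(1)] by simp
  have \<sigma>'ne: "\<sigma>' \<noteq> {}" unfolding \<sigma>'_def by auto
  have ms: "mu gt \<sigma>' \<in> facets \<sigma>'" "\<forall>\<tau>'\<in>facets \<sigma>'. \<tau>' \<noteq> mu gt \<sigma>' \<longrightarrow> gt (mu gt \<sigma>') \<tau>'"
    using mu_props[OF sc so \<sigma>'K \<sigma>'ne] by auto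
  then obtain x where x: "x \<in> \<sigma>'" "mu gt \<sigma>' = \<sigma>' - {x}" unfolding facets_image by auto
  have goal: "mu gt \<sigma>' = \<rho>'"
  proof (cases "x = a")
    case True
    then show ?thesis using x \<rho>_def \<rho>'_def \<sigma>'_def by auto
  next
    case False
    define \<phi> where "\<phi> = \<sigma>' - {x}"
    have x\<rho>': "x \<in> \<rho>'" using x False \<sigma>'_def by auto
    have \<rho>'f: "\<rho>' \<in> facets \<sigma>'" unfolding facets_image
    proof (rule image_eqI[where x=a])
      show "\<rho>' = \<sigma>' - {a}" unfolding \<sigma>'_def \<rho>'_def \<rho>_def by auto
      show "a \<in> \<sigma>'" unfolding \<sigma>'_def by simp
    qed
    have "\<rho>' \<noteq> \<phi>" using False \<rho>_def \<rho>'_def \<phi>_def \<sigma>'_def by auto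
    then have g1: "gt \<phi> \<rho>'" using ms(2) \<rho>'f x \<phi>_def by auto
    define \<psi> where "\<psi> = \<sigma> - {x}"
    have \<psi>f: "\<psi> \<in> facets \<sigma>" unfolding facets_image
    proof (rule image_eqI[where x=x])
      show "\<psi> = \<sigma> - {x}" unfolding \<psi>_def by simp
      show "x \<in> \<sigma>" using x\<rho>' unfolding \<rho>'_def \<rho>_def by simp
    qed
    have "\<psi> \<noteq> \<rho>" using False \<rho>_def \<psi>_def s(2) by auto
    then have g2: "gt \<rho> \<psi>" using mu_props[OF sc so s(1)] s \<psi>f \<rho>_def by auto
    have \<psi>K: "\<psi> \<in> K" using down s(1) \<psi>_def by blast
    have \<psi>ne: "\<psi> \<noteq> {}" using False s(2) \<psi>_def by auto
    have \<phi>f: "\<phi> \<in> facets \<psi>" unfolding facets_image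
    proof (rule image_eqI[where x=c])
      show "\<phi> = \<psi> - {c}" using c False s(2) x\<rho>' unfolding \<phi>_def \<psi>_def \<sigma>'_def \<rho>'_def \<rho>_def by auto
      show "c \<in> \<psi>" using c x\<rho>' unfolding \<psi>_def \<rho>'_def \<rho>_def by auto
    qed
    have m\<psi>: "mu gt \<psi> \<in> facets \<psi>" "\<phi> \<noteq> mu gt \<psi> \<longrightarrow> gt (mu gt \<psi>) \<phi>"
      using mu_props[OF sc so \<psi>K \<psi>ne] \<phi>f by auto
    have \<phi>K: "\<phi> \<in> K" using down \<sigma>'K \<phi>_def by blast
    have \<rho>'K: "\<rho>' \<in> K" using down \<rho>K \<rho>'_def by blast
    have m\<psi>K: "mu gt \<psi> \<in> K" using down \<psi>K facets_sub m\<psi>(1) by blast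
    have "gt (mu gt \<psi>) \<rho>'"
    proof (cases "\<phi> = mu gt \<psi>")
      case True then show ?thesis using g1 by simp
    next
      case False then show ?thesis using trR[OF m\<psi>K \<phi>K \<rho>'K] m\<psi>(2) g1 by simp
    qed
    then have "gt (mu gt \<psi>) (mu gt \<rho>)" using c \<rho>'_def by simp
    then have "gt \<psi> \<rho>" using herR[OF \<psi>K \<rho>K \<psi>ne \<rho>ne] by simp
    then show ?thesis using g2 irrR[OF \<psi>K] trR[OF \<psi>K \<rho>K \<psi>K] by simp
  qed
  show ?thesis using goal c \<rho>_def \<rho>'_def \<sigma>'_def by simp
qed

lemma main:
  fixes K :: "'a set set" and gt :: "'a set \<Rightarrow> 'a set \<Rightarrow> bool" and r :: nat
  assumes sc: "simplicial_complex K" and fl: "flag K" and h: "hereditary K gt"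
    and base: "\<forall>\<sigma>\<in>K. \<forall>\<tau>\<in>K. card \<sigma> = Suc r \<and> card \<tau> = Suc r \<and> mu gt \<sigma> = mu gt \<tau> \<longrightarrow> \<sigma> \<union> \<tau> \<in> K"
    and n: "Suc r \<le> n"
  shows "\<forall>\<sigma>\<in>K. \<forall>\<tau>\<in>K. card \<sigma> = n \<and> card \<tau> = n \<and> mu gt \<sigma> = mu gt \<tau> \<longrightarrow> \<sigma> \<union> \<tau> \<in> K"
  using n
proof (induction n rule: dec_induct)
  case base then show ?case using assms(4) by simp
next
  case (step n)
  note so = h[unfolded hereditary_def, THEN conjunct1]
  have down: "\<And>x y. x \<in> K \<Longrightarrow> y \<subseteq> x \<Longrightarrow> y \<in> K" using sc unfolding simplicial_complex_def by blast
  have finK: "\<And>x. x \<in> K \<Longrightarrow> finite x" using sc unfolding simplicial_complex_def by blast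
  show ?case
  proof (intro ballI impI)
    fix \<sigma> \<tau> assume \<sigma>K: "\<sigma> \<in> K" and \<tau>K: "\<tau> \<in> K"
      and H: "card \<sigma> = Suc n \<and> card \<tau> = Suc n \<and> mu gt \<sigma> = mu gt \<tau>"
    have fs: "finite \<sigma>" "finite \<tau>" using finK \<sigma>K \<tau>K by auto
    have \<sigma>ne: "\<sigma> \<noteq> {}" "\<tau> \<noteq> {}" using H by auto
    obtain a where a: "a \<in> \<sigma>" "mu gt \<sigma> = \<sigma> - {a}"
      using mu_props[OF sc so \<sigma>K \<sigma>ne(1), THEN conjunct1] unfolding facets_image by blast
    obtain b where b: "b \<in> \<tau>" "mu gt \<tau> = \<tau> - {b}"
      using mu_props[OF sc so \<tau>K \<sigma>ne(2), THEN conjunct1] unfolding facets_image by blast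
    define \<rho> where "\<rho> = \<sigma> - {a}"
    have mm: "mu gt \<sigma> = mu gt \<tau>" using H by (rule conjunct2[THEN conjunct2])
    have \<tau>\<rho>: "\<tau> - {b} = \<rho>" unfolding \<rho>_def using a(2) b(2) mm by simp
    have \<sigma>eq: "\<sigma> = insert a \<rho>" unfolding \<rho>_def using a(1) by blast
    have \<tau>eq: "\<tau> = insert b \<rho>" unfolding \<tau>\<rho>[symmetric] using b(1) by blast
    have a\<rho>: "a \<notin> \<rho>" unfolding \<rho>_def by simp
    have b\<rho>: "b \<notin> \<rho>" unfolding \<tau>\<rho>[symmetric] by simp
    have cs: "card \<sigma> = Suc n" using H by simp
    have c\<rho>: "card \<rho> = n" using cs fs(1) a(1) unfolding \<rho>_def by (simp add: card_Diff_singleton)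
    show "\<sigma> \<union> \<tau> \<in> K"
    proof (cases "a = b")
      case True then show ?thesis using \<sigma>eq \<tau>eq \<sigma>K by simp
    next
      case False
      have \<rho>ne: "\<rho> \<noteq> {}" using c\<rho> step.hyps(1) by auto
      have \<rho>K: "\<rho> \<in> K" unfolding \<rho>_def using down[OF \<sigma>K, of "\<sigma> - {a}"] by blast
      have m\<rho>: "mu gt \<rho> \<in> facets \<rho>" using mu_props[OF sc so \<rho>K \<rho>ne] by simp
      then obtain c where c: "c \<in> \<rho>" "mu gt \<rho> = \<rho> - {c}" unfolding facets_image by blast
      have fr: "finite \<rho>" unfolding \<rho>_def using fs(1) by simp
      have n1: "n \<ge> 1" using step.hyps(1) by simp
      define \<sigma>' where "\<sigma>' = insert a (mu gt \<rho>)"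
      define \<tau>' where "\<tau>' = insert b (mu gt \<rho>)"
      have s1: "mu gt \<sigma>' = mu gt \<rho>" unfolding \<sigma>'_def \<rho>_def
        by (rule mu_shift[OF sc h \<sigma>K a(1) a(2) \<rho>ne[unfolded \<rho>_def]])
      have s2: "mu gt \<tau>' = mu gt \<rho>" unfolding \<tau>'_def
        using mu_shift[OF sc h \<tau>K b(1) b(2)] \<rho>ne unfolding \<tau>\<rho> by simp
      have cm: "card (mu gt \<rho>) = n - 1" unfolding c(2) using fr c(1) c\<rho> by (simp add: card_Diff_singleton)
      have fm: "finite (mu gt \<rho>)" unfolding c(2) using fr by simp
      have am: "a \<notin> mu gt \<rho>" "b \<notin> mu gt \<rho>" unfolding c(2) using a\<rho> b\<rho> by auto
      have cc: "card \<sigma>' = n" "card \<tau>' = n" unfolding \<sigma>'_def \<tau>'_def using cm fm am n1 by simp_all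
      have "insert a (mu gt \<rho>) \<subseteq> \<sigma>" "insert b (mu gt \<rho>) \<subseteq> \<tau>" unfolding c(2) \<sigma>eq \<tau>eq by auto
      then have K': "\<sigma>' \<in> K" "\<tau>' \<in> K" unfolding \<sigma>'_def \<tau>'_def
        using down[OF \<sigma>K] down[OF \<tau>K] by auto
      have "\<sigma>' \<union> \<tau>' \<in> K" using step.IH[rule_format, OF K'] cc s1 s2 by simp
      moreover have "{a, b} \<subseteq> \<sigma>' \<union> \<tau>'" unfolding \<sigma>'_def \<tau>'_def by auto
      ultimately have ab: "{a, b} \<in> K" by (rule down)
      have S: "\<sigma> \<union> \<tau> = insert a (insert b \<rho>)" using \<sigma>eq \<tau>eq by auto
      have "\<forall>v\<in>\<sigma> \<union> \<tau>. \<forall>w\<in>\<sigma> \<union> \<tau>. v \<noteq> w \<longrightarrow> {v, w} \<in> K"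
      proof (intro ballI impI)
        fix v w assume v: "v \<in> \<sigma> \<union> \<tau>" and w: "w \<in> \<sigma> \<union> \<tau>" and "v \<noteq> w"
        show "{v, w} \<in> K"
        proof (cases "{v, w} \<subseteq> \<sigma> \<or> {v, w} \<subseteq> \<tau>")
          case True then show ?thesis using down[OF \<sigma>K] down[OF \<tau>K] by auto
        next
          case False
          then have "{v, w} = {a, b}" using v w S \<sigma>eq \<tau>eq by auto
          then show ?thesis using ab by simp
        qed
      qed
      moreover have "\<sigma> \<union> \<tau> \<subseteq> vertices K" unfolding vertices_def using \<sigma>K \<tau>K by auto
      moreover have "finite (\<sigma> \<union> \<tau>)" "\<sigma> \<union> \<tau> \<noteq> {}" using fs \<sigma>ne by auto
      ultimately show ?thesis using fl[unfolded flag_def, rule_format, of "\<sigma> \<union> \<tau>"] by blast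
    qed
  qed
qed

theorem lemma6:
  fixes K :: "'a set set" and gt :: "'a set \<Rightarrow> 'a set \<Rightarrow> bool" and r :: nat
  assumes "simplicial_complex K"
    and "flag K"
    and "hereditary K gt"
    and "r > 0"
    and "\<forall>\<sigma>\<in>K. \<forall>\<tau>\<in>K. sdim \<sigma> = int r \<and> sdim \<tau> = int r \<and> mu gt \<sigma> = mu gt \<tau> \<longrightarrow> \<sigma> \<union> \<tau> \<in> K"
  shows "\<forall>\<sigma>\<in>K. \<forall>\<tau>\<in>K. sdim \<sigma> = sdim \<tau> \<and> sdim \<sigma> > int r \<and> mu gt \<sigma> = mu gt \<tau> \<longrightarrow> \<sigma> \<union> \<tau> \<in> K"
proof (intro ballI impI)
  fix \<sigma> \<tau> assume \<sigma>K: "\<sigma> \<in> K" and \<tau>K: "\<tau> \<in> K"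
    and H: "sdim \<sigma> = sdim \<tau> \<and> sdim \<sigma> > int r \<and> mu gt \<sigma> = mu gt \<tau>"
  have base: "\<forall>\<sigma>\<in>K. \<forall>\<tau>\<in>K. card \<sigma> = Suc r \<and> card \<tau> = Suc r \<and> mu gt \<sigma> = mu gt \<tau> \<longrightarrow> \<sigma> \<union> \<tau> \<in> K"
    using assms(5) unfolding sdim_def by auto
  have c: "card \<sigma> = card \<tau>" "Suc r \<le> card \<sigma>" using H unfolding sdim_def by auto
  show "\<sigma> \<union> \<tau> \<in> K" using main[OF assms(1-3) base c(2)] \<sigma>K \<tau>K c H by auto
qed

end
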